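(* Let $(\mathrm{Con},\sqsubseteq,(s_i)_{i\in G})$ be a spatial constraint system with distributed spaces $(\Delta_I)_{I\subseteq G}$, let $I\subseteq G$ and $c,e\in\mathrm{Con}$, and suppose $c\sqsupseteq\Delta_I(e)$. If $e$ is compact and $\pi_I(c)\sqsupseteq e$, then there exists a finite set $J\subseteq I$ such that $c\sqsupseteq\Delta_J(e)$.
   Context: A constraint system (cs) is a complete lattice $(\mathrm{Con},\sqsubseteq)$ with join $\sqcup$, bottom $\mathit{true}$. A space function is a continuous (directed-join preserving) self-map $f$ on $\mathrm{Con}$ with $f(\mathit{true})=\mathit{true}$ and $f(c\sqcup d)=f(c)\sqcup f(d)$; $\mathcal{S}(\mathrm{Con})$ denotes the set of space functions ordered pointwise ($f\preceq g$ iff $f(c)\sqsubseteq g(c)$ for all $c$). A spatial constraint system $(\mathrm{Con},\sqsubseteq,(s_i)_{i\in G})$ is a cs with space functions $s_i$ indexed by an arbitrary (possibly infinite) set $G$. Distributed spaces: $\Delta_I=\max\{f\in\mathcal{S}(\mathrm{Con}) : f\preceq s_i\text{ for all }i\in I\}$ (this maximum exists). $\pi_i(c)=\bigsqcup\{e' : c\sqsupseteq s_i(e')\}$ and $\pi_I(c)=\bigsqcup\{\pi_i(c): i\in I\}$. An element $e$ is compact if for every directed set $D\subseteq\mathrm{Con}$, $e\sqsubseteq\bigsqcup D$ implies $e\sqsubseteq d$ for some $d\in D$. *)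

theory Defs
  imports Main
begin

text \<open>Constraint systems: a complete lattice 'a (order \<le> is \<sqsubseteq>, sup is the join,
  bot is true). Directed sets are nonempty and have upper bounds of pairs.\<close>

definition directed :: "'a::complete_lattice set \<Rightarrow> bool" where
  "directed D \<longleftrightarrow> D \<noteq> {} \<and> (\<forall>x\<in>D. \<forall>y\<in>D. \<exists>z\<in>D. x \<le> z \<and> y \<le> z)"

definition continuous_map :: "('a::complete_lattice \<Rightarrow> 'a) \<Rightarrow> bool" where
  "continuous_map f \<longleftrightarrow> (\<forall>D. directed D \<longrightarrow> f (Sup D) = Sup (f ` D))"

definition space_fun :: "('a::complete_lattice \<Rightarrow> 'a) \<Rightarrow> bool" where
  "space_fun f \<longleftrightarrow> continuous_map f \<and> f bot = bot \<and> (\<forall>c d. f (sup c d) = sup (f c) (f d))"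

definition spatial_cs :: "'i set \<Rightarrow> ('i \<Rightarrow> 'a::complete_lattice \<Rightarrow> 'a) \<Rightarrow> bool" where
  "spatial_cs G s \<longleftrightarrow> (\<forall>i\<in>G. space_fun (s i))"

definition Delta :: "('i \<Rightarrow> 'a::complete_lattice \<Rightarrow> 'a) \<Rightarrow> 'i set \<Rightarrow> 'a \<Rightarrow> 'a" where
  "Delta s I = (GREATEST f. space_fun f \<and> (\<forall>i\<in>I. f \<le> s i))"

definition pi1 :: "('i \<Rightarrow> 'a::complete_lattice \<Rightarrow> 'a) \<Rightarrow> 'i \<Rightarrow> 'a \<Rightarrow> 'a" where
  "pi1 s i c = Sup {e'. s i e' \<le> c}"

definition piI :: "('i \<Rightarrow> 'a::complete_lattice \<Rightarrow> 'a) \<Rightarrow> 'i set \<Rightarrow> 'a \<Rightarrow> 'a" where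
  "piI s I c = Sup {pi1 s i c | i. i \<in> I}"

definition compact :: "'a::complete_lattice \<Rightarrow> bool" where
  "compact e \<longleftrightarrow> (\<forall>D. directed D \<longrightarrow> e \<le> Sup D \<longrightarrow> (\<exists>d\<in>D. e \<le> d))"

end

theory Submission
  imports Defs
begin

lemma Sup_space_fun:
  fixes S :: "('a::complete_lattice \<Rightarrow> 'a) set"
  assumes "\<And>f. f \<in> S \<Longrightarrow> space_fun f"
  shows "space_fun (Sup S)"
proof -
  have c: "continuous_map (Sup S)"
    unfolding continuous_map_def
  proof (intro allI impI)
    fix D :: "'a set" assume d: "directed D"
    have "(Sup S) (Sup D) = (SUP f\<in>S. SUP x\<in>D. f x)"
      using assms d by (simp add: space_fun_def continuous_map_def)
    also have "\<dots> = (SUP x\<in>D. SUP f\<in>S. f x)" by (rule SUP_commute)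
    finally show "(Sup S) (Sup D) = Sup (Sup S ` D)" by (simp add: image_image)
  qed
  have b: "(Sup S) bot = bot" using assms by (simp add: space_fun_def)
  have u: "\<forall>x y. (Sup S) (sup x y) = sup ((Sup S) x) ((Sup S) y)"
  proof (intro allI)
    fix x y
    have "(Sup S) (sup x y) = (SUP f\<in>S. sup (f x) (f y))"
      using assms by (simp add: space_fun_def)
    also have "\<dots> = sup (SUP f\<in>S. f x) (SUP f\<in>S. f y)" by (rule Complete_Lattices.SUP_sup_distrib[symmetric])
    finally show "(Sup S) (sup x y) = sup ((Sup S) x) ((Sup S) y)" by simp
  qed
  show ?thesis using c b u by (simp add: space_fun_def)
qed

lemma bot_space_fun: "space_fun (\<lambda>x. bot :: 'a::complete_lattice)"
  by (simp add: space_fun_def continuous_map_def)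

lemma Delta_prop:
  fixes s :: "'i \<Rightarrow> 'a::complete_lattice \<Rightarrow> 'a"
  shows "space_fun (Delta s J) \<and> (\<forall>i\<in>J. Delta s J \<le> s i)"
proof -
  let ?P = "\<lambda>f. space_fun f \<and> (\<forall>i\<in>J. f \<le> s i)"
  let ?S = "Collect ?P"
  have "space_fun (Sup ?S)"
    by (rule Sup_space_fun) simp
  moreover have "\<forall>i\<in>J. Sup ?S \<le> s i"
  proof
    fix i assume "i \<in> J"
    show "Sup ?S \<le> s i"
    proof (rule Sup_least)
      fix f assume "f \<in> ?S" then show "f \<le> s i" using \<open>i \<in> J\<close> by simp
    qed
  qed
  ultimately have "?P (Sup ?S)" by simp
  moreover have "\<And>y. ?P y \<Longrightarrow> y \<le> Sup ?S"
  proof -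
    fix y assume "?P y" then have "y \<in> ?S" by simp
    then show "y \<le> Sup ?S" by (rule Sup_upper)
  qed
  ultimately have "Delta s J = Sup ?S"
    unfolding Delta_def by (rule Greatest_equality)
  with \<open>?P (Sup ?S)\<close> show ?thesis by simp
qed

lemma space_fun_mono:
  assumes "space_fun f" "x \<le> y" shows "f x \<le> f y"
proof -
  have "f y = sup (f x) (f y)" using assms
    by (metis space_fun_def sup.absorb2)
  then show ?thesis by (metis sup.cobounded1)
qed

lemma space_fun_finite:
  assumes "space_fun f" "finite P"
  shows "f (Sup (g ` P)) = Sup ((\<lambda>x. f (g x)) ` P)"
  using assms(2)
proof (induction P rule: finite_induct)
  case empty then show ?case using assms(1) by (simp add: space_fun_def)
next
  case (insert x F) then show ?case using assms(1) by (simp add: space_fun_def)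
qed

theorem mainTheorem4:
  fixes G :: "'i set" and s :: "'i \<Rightarrow> 'a::complete_lattice \<Rightarrow> 'a"
    and I :: "'i set" and c e :: 'a
  assumes "spatial_cs G s"
    and "I \<subseteq> G"
    and "Delta s I e \<le> c"
    and "compact e"
    and "e \<le> piI s I c"
  shows "\<exists>J. finite J \<and> J \<subseteq> I \<and> Delta s J e \<le> c"
proof -
  define Q where "Q = {(i,a). i \<in> I \<and> s i a \<le> c}"
  define D where "D = {Sup (snd ` P) | P. finite P \<and> P \<subseteq> Q}"
  have dir: "directed D"
    unfolding directed_def
  proof
    show "D \<noteq> {}" unfolding D_def by blast
    show "\<forall>x\<in>D. \<forall>y\<in>D. \<exists>z\<in>D. x \<le> z \<and> y \<le> z"
    proof (intro ballI)
      fix x y assume "x \<in> D" "y \<in> D"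
      then obtain P1 P2 where p: "finite P1" "P1 \<subseteq> Q" "x = Sup (snd ` P1)"
        "finite P2" "P2 \<subseteq> Q" "y = Sup (snd ` P2)" unfolding D_def by blast
      have "Sup (snd ` (P1 \<union> P2)) \<in> D" unfolding D_def using p by blast
      moreover have "x \<le> Sup (snd ` (P1 \<union> P2))" "y \<le> Sup (snd ` (P1 \<union> P2))"
        using p by (auto intro!: Sup_subset_mono)
      ultimately show "\<exists>z\<in>D. x \<le> z \<and> y \<le> z" by blast
    qed
  qed
  have "piI s I c \<le> Sup D"
    unfolding piI_def pi1_def
  proof (rule Sup_least, clarify)
    fix i assume i: "i \<in> I"
    show "Sup {e'. s i e' \<le> c} \<le> Sup D"
    proof (rule Sup_least, simp)
      fix a assume "s i a \<le> c"
      then have "Sup (snd ` {(i,a)}) \<in> D" unfolding D_def Q_def using i by blast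
      moreover have "Sup (snd ` {(i,a)}) = a" by simp
      ultimately show "a \<le> Sup D" by (metis Sup_upper)
    qed
  qed
  with assms(5) have "e \<le> Sup D" by (rule order_trans)
  with assms(4) dir obtain d where "d \<in> D" "e \<le> d" unfolding compact_def by blast
  then obtain P where P: "finite P" "P \<subseteq> Q" "e \<le> Sup (snd ` P)" unfolding D_def by blast
  define J where "J = fst ` P"
  have sf: "space_fun (Delta s J)" using Delta_prop[of s J] by (rule conjunct1)
  have le: "\<forall>i\<in>J. Delta s J \<le> s i" using Delta_prop[of s J] by (rule conjunct2)
  have "Delta s J e \<le> Delta s J (Sup (snd ` P))" using sf P(3) by (rule space_fun_mono)
  also have "\<dots> = Sup ((\<lambda>x. Delta s J (snd x)) ` P)" by (rule space_fun_finite[OF sf P(1), of snd])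
  also have "\<dots> \<le> c"
  proof (rule Sup_least, clarify)
    fix i a assume ia: "(i, a) \<in> P"
    then have "i \<in> J" unfolding J_def by force
    then have "Delta s J a \<le> s i a" using le by (simp add: le_fun_def)
    also have "s i a \<le> c" using ia P(2) unfolding Q_def by blast
    finally show "Delta s J (snd (i, a)) \<le> c" by simp
  qed
  finally have "Delta s J e \<le> c" .
  moreover have "finite J" "J \<subseteq> I" using P unfolding J_def Q_def by auto
  ultimately show ?thesis by blast
qed

end
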